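(* Let $\phi\ge \tfrac12$ and let $\lambda,\beta,\mu\ge 1$. On any $(\lambda,\beta,\mu)$-separable smoothed combinatorial local optimization instance with parameters $M,\nu,\bar\nu$ and density bound $\phi$, the expected value (over the random cost vector $c$) of the maximum number of steps performed by standard local search — maximum taken over all starting configurations and all sequences of improving moves, i.e. the length of a longest directed path in the transition graph — is at most $$3\cdot \mu^{\beta}\,\lambda\,\nu^2\, M\log_2(M+1)\,\phi .$$
   Context: A combinatorial local optimization (CLO) instance consists of integers $M,\nu\ge 1$, $\bar\nu\ge 0$; a finite set of feasible configurations $\mathbf S\subseteq\{0,1,\dots,M\}^{\nu}\times\{0,1\}^{\bar\nu}$, where a configuration is written $s=(s^\bullet,s^\circ)$ with cost part $s^\bullet=(s_1,\dots,s_\nu)\in\{0,\dots,M\}^\nu$; a cost vector $c\in[-1,1]^\nu$; and a neighbourhood function $N:\mathbf S\to 2^{\mathbf S}$. The cost of $s$ is $C(s)=\sum_{i=1}^\nu c_i s_i$. The neighbourhood graph is the directed graph $G=(\mathbf S,E)$ with $E=\{(s,s'): s\in\mathbf S,\ s'\in N(s)\}$; the transition graph is its subgraph with edges $\{(s,s')\in E: C(s')<C(s)\}$. Standard local search starts at an arbitrary configuration and repeatedly moves to an arbitrary neighbour of strictly smaller cost, until none exists (a local minimum). In the smoothed model, each $c_i$ is drawn independently from a continuous distribution with density $f_i:[-1,1]\to[0,\phi]$ (the $f_i$ may be chosen adversarially). For $I\subseteq[\nu]$ and a vector $x$, $x_I$ denotes the subvector of components indexed by $I$. A covering $(\mathcal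 E,\mathcal I)$ consists of $\mathcal E\subseteq 2^E$ with $\bigcup_{T\in\mathcal E}T=E$ (transition clusters) and $\mathcal I\subseteq 2^{[\nu]}$ with $\bigcup_{I\in\mathcal I}I=[\nu]$ (coordinate clusters). For $T\subseteq E$, its core is $\mathrm{core}(T)=\{i\in[\nu]: s^\bullet_i\ne s'^\bullet_i \text{ for some }(s,s')\in T\}$, and its diversity with respect to $I\subseteq[\nu]$ is $\delta_I(T)=|\{s^\bullet_I-s'^\bullet_I:(s,s')\in T\}|$. The instance is $(\lambda,\beta,\mu)$-separable if it has a covering $(\mathcal E,\mathcal I)$ with $|\mathcal E|\le\lambda$ such that every $T\in\mathcal E$ satisfies: (a) there is $\mathcal I_T\subseteq\mathcal I$ with $|\mathcal I_T|\le\beta$ and $\mathrm{core}(T)\subseteq\bigcup_{I\in\mathcal I_T}I$; (b) $\max_{I\in\mathcal I}\delta_I(T)\le\mu$. *)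

theory Defs
  imports "HOL-Probability.Probability"
begin

text \<open>A configuration s = (s_bullet, s_circ): cost part as a nat list of length nu,
  the auxiliary 0/1 part as a bool list of length nu_bar. Coordinates are 0-based:
  the index set [nu] is rendered as {..<nu}.\<close>
type_synonym config = "nat list \<times> bool list"

definition configs :: "nat \<Rightarrow> nat \<Rightarrow> nat \<Rightarrow> config set" where
  "configs M \<nu> \<nu>b = {s. length (fst s) = \<nu> \<and> (\<forall>x\<in>set (fst s). x \<le> M) \<and> length (snd s) = \<nu>b}"

definition cost :: "nat \<Rightarrow> (nat \<Rightarrow> real) \<Rightarrow> config \<Rightarrow> real" where
  "cost \<nu> c s = (\<Sum>i<\<nu>. c i * real (fst s ! i))"

definition nbh_edges :: "config set \<Rightarrow> (config \<Rightarrow> config set) \<Rightarrow> (config \<times> config) set" where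
  "nbh_edges S N = {(s, s'). s \<in> S \<and> s' \<in> N s}"

definition trans_edges :: "nat \<Rightarrow> (nat \<Rightarrow> real) \<Rightarrow> config set \<Rightarrow> (config \<Rightarrow> config set) \<Rightarrow> (config \<times> config) set" where
  "trans_edges \<nu> c S N = {(s, s') \<in> nbh_edges S N. cost \<nu> c s' < cost \<nu> c s}"

definition trans_paths :: "nat \<Rightarrow> (nat \<Rightarrow> real) \<Rightarrow> config set \<Rightarrow> (config \<Rightarrow> config set) \<Rightarrow> config list set" where
  "trans_paths \<nu> c S N = {p. p \<noteq> [] \<and> set p \<subseteq> S \<and>
      (\<forall>j < length p - 1. (p ! j, p ! Suc j) \<in> trans_edges \<nu> c S N)}"

definition max_steps :: "nat \<Rightarrow> (nat \<Rightarrow> real) \<Rightarrow> config set \<Rightarrow> (config \<Rightarrow> config set) \<Rightarrow> ennreal" where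
  "max_steps \<nu> c S N = (SUP p \<in> trans_paths \<nu> c S N. ennreal (real (length p - 1)))"

definition core :: "nat \<Rightarrow> (config \<times> config) set \<Rightarrow> nat set" where
  "core \<nu> T = {i \<in> {..<\<nu>}. \<exists>(s, s') \<in> T. fst s ! i \<noteq> fst s' ! i}"

definition diversity :: "nat set \<Rightarrow> (config \<times> config) set \<Rightarrow> nat" where
  "diversity I T = card ((\<lambda>(s, s'). restrict (\<lambda>i. int (fst s ! i) - int (fst s' ! i)) I) ` T)"

definition separable :: "nat \<Rightarrow> config set \<Rightarrow> (config \<Rightarrow> config set) \<Rightarrow> nat \<Rightarrow> nat \<Rightarrow> nat \<Rightarrow> bool" where
  "separable \<nu> S N lam \<beta> \<mu> \<longleftrightarrow>
    (\<exists>\<E> \<I>. finite \<E> \<and> (\<forall>T\<in>\<E>. T \<subseteq> nbh_edges S N) \<and> \<Union>\<E> = nbh_edges S N \<and>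
       (\<forall>I\<in>\<I>. I \<subseteq> {..<\<nu>}) \<and> \<Union>\<I> = {..<\<nu>} \<and> card \<E> \<le> lam \<and>
       (\<forall>T\<in>\<E>. (\<exists>\<I>T \<subseteq> \<I>. finite \<I>T \<and> card \<I>T \<le> \<beta> \<and> core \<nu> T \<subseteq> \<Union>\<I>T) \<and>
                (\<forall>I\<in>\<I>. diversity I T \<le> \<mu>)))"

definition smoothed_density :: "real \<Rightarrow> (real \<Rightarrow> real) \<Rightarrow> bool" where
  "smoothed_density \<phi> g \<longleftrightarrow> g \<in> borel_measurable lborel \<and>
     (\<forall>x. 0 \<le> g x \<and> g x \<le> \<phi>) \<and> (\<forall>x. x \<notin> {-1..1} \<longrightarrow> g x = 0) \<and>
     (\<integral>\<^sup>+ x. ennreal (g x) \<partial>lborel) = 1"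

end

theory Submission
  imports Defs
begin

lemma dens_interval:
  fixes g :: "real \<Rightarrow> real" and b :: int
  assumes g: "smoothed_density \<phi> g" and b: "b \<noteq> 0" and e: "\<epsilon> \<ge> 0"
  shows "emeasure (density lborel (\<lambda>x. ennreal (g x))) {y. 0 < a + real_of_int b * y \<and> a + real_of_int b * y \<le> \<epsilon>}
          \<le> ennreal (\<phi> * \<epsilon>)"
proof -
  let ?A = "{y. 0 < a + real_of_int b * y \<and> a + real_of_int b * y \<le> \<epsilon>}"
  have gm[measurable]: "g \<in> borel_measurable borel" using g unfolding smoothed_density_def by simp
  have g0: "\<And>x. 0 \<le> g x" and gphi: "\<And>x. g x \<le> \<phi>" using g unfolding smoothed_density_def by auto
  have phi0: "0 \<le> \<phi>" using g0[of 0] gphi[of 0] by simp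
  have Am[measurable]: "?A \<in> sets borel" by measurable
  obtain l where sub: "?A \<subseteq> {l..l + \<epsilon> / \<bar>real_of_int b\<bar>}"
  proof (cases "b > 0")
    case True
    show ?thesis
    proof (rule that[of "-a / real_of_int b"], standard)
      fix y assume "y \<in> ?A"
      then have "0 < a + real_of_int b * y" "a + real_of_int b * y \<le> \<epsilon>" by auto
      with True show "y \<in> {- a / real_of_int b..- a / real_of_int b + \<epsilon> / \<bar>real_of_int b\<bar>}"
        by (auto simp: field_simps)
    qed
  next
    case False
    then have bn: "real_of_int b < 0" using b by simp
    show ?thesis
    proof (rule that[of "(\<epsilon> - a) / real_of_int b"], standard)
      fix y assume "y \<in> ?A"
      then have "0 < a + real_of_int b * y" "a + real_of_int b * y \<le> \<epsilon>" by auto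
      with bn show "y \<in> {(\<epsilon> - a) / real_of_int b..(\<epsilon> - a) / real_of_int b + \<epsilon> / \<bar>real_of_int b\<bar>}"
        by (auto simp: field_simps)
    qed
  qed
  have "emeasure (density lborel (\<lambda>x. ennreal (g x))) ?A = (\<integral>\<^sup>+ x. ennreal (g x) * indicator ?A x \<partial>lborel)"
    by (rule emeasure_density) auto
  also have "\<dots> \<le> (\<integral>\<^sup>+ x. ennreal \<phi> * indicator {l..l + \<epsilon> / \<bar>real_of_int b\<bar>} x \<partial>lborel)"
    apply (rule nn_integral_mono)
    using sub gphi by (auto split: split_indicator intro: ennreal_leI)
  also have "\<dots> = ennreal \<phi> * emeasure lborel {l..l + \<epsilon> / \<bar>real_of_int b\<bar>}"
    by (subst nn_integral_cmult_indicator) auto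
  also have "\<dots> = ennreal (\<phi> * (\<epsilon> / \<bar>real_of_int b\<bar>))"
    using e phi0 by (simp add: ennreal_mult[symmetric])
  also have "\<dots> \<le> ennreal (\<phi> * \<epsilon>)"
  proof (rule ennreal_leI, rule mult_left_mono[OF _ phi0])
    have "1 \<le> \<bar>real_of_int b\<bar>" using b by linarith
    then show "\<epsilon> / \<bar>real_of_int b\<bar> \<le> \<epsilon>" using e by (simp add: divide_le_eq mult_le_cancel_left1)
  qed
  finally show ?thesis .
qed


lemma dens_prob:
  assumes g: "smoothed_density \<phi> g"
  shows "prob_space (density lborel (\<lambda>x. ennreal (g x)))"
proof
  have gm[measurable]: "g \<in> borel_measurable borel" using g unfolding smoothed_density_def by simp
  show "emeasure (density lborel (\<lambda>x. ennreal (g x))) (space (density lborel (\<lambda>x. ennreal (g x)))) = 1"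
    using g unfolding smoothed_density_def by (simp add: emeasure_density)
qed

lemma prod_bound:
  fixes d :: "nat \<Rightarrow> int" and f :: "nat \<Rightarrow> real \<Rightarrow> real"
  assumes dens: "\<forall>i<\<nu>. smoothed_density \<phi> (f i)" and i0: "i0 < \<nu>" and d0: "d i0 \<noteq> 0" and e: "\<epsilon> \<ge> 0"
  shows "emeasure (PiM {..<\<nu>} (\<lambda>i. density lborel (\<lambda>x. ennreal (f i x))))
     {c \<in> space (PiM {..<\<nu>} (\<lambda>i. density lborel (\<lambda>x. ennreal (f i x)))).
        0 < (\<Sum>i<\<nu>. real_of_int (d i) * c i) \<and> (\<Sum>i<\<nu>. real_of_int (d i) * c i) \<le> \<epsilon>}
     \<le> ennreal (\<phi> * \<epsilon>)"
proof -
  define g where "g i = (if i < \<nu> then f i else f i0)" for i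
  define Mi where "Mi i = density lborel (\<lambda>x. ennreal (g i x))" for i
  have gd: "smoothed_density \<phi> (g i)" for i using dens i0 unfolding g_def by auto
  have gm[measurable]: "g i \<in> borel_measurable borel" for i using gd[of i] unfolding smoothed_density_def by simp
  have pr: "prob_space (Mi i)" for i unfolding Mi_def by (rule dens_prob[OF gd])
  interpret product_sigma_finite Mi
    by (simp add: product_sigma_finite_def pr prob_space_imp_sigma_finite)
  have PEq: "PiM {..<\<nu>} (\<lambda>i. density lborel (\<lambda>x. ennreal (f i x))) = PiM {..<\<nu>} Mi"
    by (rule PiM_cong) (auto simp: Mi_def g_def)
  define I where "I = {..<\<nu>} - {i0}"
  have ins: "insert i0 I = {..<\<nu>}" using i0 by (auto simp: I_def)
  have fI: "finite I" "i0 \<notin> I" by (auto simp: I_def)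
  define A where "A = {c \<in> space (PiM {..<\<nu>} Mi).
        0 < (\<Sum>i<\<nu>. real_of_int (d i) * c i) \<and> (\<Sum>i<\<nu>. real_of_int (d i) * c i) \<le> \<epsilon>}"
  have comp[measurable]: "(\<lambda>x. x i) \<in> borel_measurable (PiM {..<\<nu>} Mi)" if "i \<in> {..<\<nu>}" for i
  proof -
    have "(\<lambda>x. x i) \<in> measurable (PiM {..<\<nu>} Mi) (Mi i)" by (rule measurable_component_singleton) (use that in simp)
    moreover have "sets (Mi i) = sets borel" by (simp add: Mi_def)
    ultimately show ?thesis using measurable_cong_sets[OF refl, of "Mi i" borel] by metis
  qed
  have sm[measurable]: "(\<lambda>c. \<Sum>i<\<nu>. real_of_int (d i) * c i) \<in> borel_measurable (PiM {..<\<nu>} Mi)"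
    by (intro borel_measurable_sum borel_measurable_times borel_measurable_const comp) auto
  have Am[measurable]: "A \<in> sets (PiM {..<\<nu>} Mi)" unfolding A_def by measurable
  interpret PI: prob_space "PiM I Mi" by (rule prob_space_PiM[OF pr])
  have "emeasure (PiM {..<\<nu>} Mi) A = (\<integral>\<^sup>+ c. indicator A c \<partial>PiM (insert i0 I) Mi)"
    by (simp add: ins)
  also have "\<dots> = (\<integral>\<^sup>+ x. (\<integral>\<^sup>+ y. indicator A (x(i0 := y)) \<partial>(Mi i0)) \<partial>(PiM I Mi))"
    by (rule product_nn_integral_insert[OF fI]) (simp add: ins)
  also have "\<dots> \<le> (\<integral>\<^sup>+ x. ennreal (\<phi> * \<epsilon>) \<partial>(PiM I Mi))"
  proof (rule nn_integral_mono)
    fix x assume x: "x \<in> space (PiM I Mi)"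
    define a where "a = (\<Sum>i\<in>I. real_of_int (d i) * x i)"
    have "(\<integral>\<^sup>+ y. indicator A (x(i0 := y)) \<partial>(Mi i0)) \<le>
        (\<integral>\<^sup>+ y. indicator {y. 0 < a + real_of_int (d i0) * y \<and> a + real_of_int (d i0) * y \<le> \<epsilon>} y \<partial>(Mi i0))"
    proof (rule nn_integral_mono)
      fix y assume "y \<in> space (Mi i0)"
      have "(\<Sum>i<\<nu>. real_of_int (d i) * (x(i0 := y)) i) = real_of_int (d i0) * y + (\<Sum>i\<in>I. real_of_int (d i) * (x(i0 := y)) i)"
        by (subst ins[symmetric], subst sum.insert[OF fI]) auto
      also have "(\<Sum>i\<in>I. real_of_int (d i) * (x(i0 := y)) i) = a"
        unfolding a_def using fI by (intro sum.cong) auto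
      finally have eq: "(\<Sum>i<\<nu>. real_of_int (d i) * (x(i0 := y)) i) = a + real_of_int (d i0) * y" by simp
      show "(indicator A (x(i0 := y)) :: ennreal) \<le> indicator {y. 0 < a + real_of_int (d i0) * y \<and> a + real_of_int (d i0) * y \<le> \<epsilon>} y"
        using eq unfolding A_def by (auto split: split_indicator)
    qed
    also have "\<dots> = emeasure (Mi i0) {y. 0 < a + real_of_int (d i0) * y \<and> a + real_of_int (d i0) * y \<le> \<epsilon>}"
      by (rule nn_integral_indicator) (simp add: Mi_def)
    also have "\<dots> \<le> ennreal (\<phi> * \<epsilon>)"
      unfolding Mi_def by (rule dens_interval[OF gd d0 e])
    finally show "(\<integral>\<^sup>+ y. indicator A (x(i0 := y)) \<partial>(Mi i0)) \<le> ennreal (\<phi> * \<epsilon>)" .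
  qed
  also have "\<dots> = ennreal (\<phi> * \<epsilon>)" by (simp add: PI.emeasure_space_1)
  finally show ?thesis unfolding PEq A_def .
qed


definition dvec :: "nat \<Rightarrow> config \<times> config \<Rightarrow> nat \<Rightarrow> int" where
  "dvec \<nu> e = restrict (\<lambda>i. int (fst (fst e) ! i) - int (fst (snd e) ! i)) {..<\<nu>}"

lemma card_DT:
  fixes T :: "(config \<times> config) set" and IT :: "nat set set"
  assumes fT: "finite T" and fI: "finite IT" and cI: "card IT \<le> \<beta>" and mu: "\<mu> \<ge> 1"
    and core: "core \<nu> T \<subseteq> \<Union>IT" and sub: "\<forall>I\<in>IT. I \<subseteq> {..<\<nu>}" and div: "\<forall>I\<in>IT. diversity I T \<le> \<mu>"
  shows "card (dvec \<nu> ` T) \<le> \<mu> ^ \<beta>"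
proof -
  define R where "R I = (\<lambda>(s, s'). restrict (\<lambda>i. int (fst s ! i) - int (fst s' ! i)) I) ` T" for I
  define h where "h d = (\<lambda>I\<in>IT. restrict d I)" for d :: "nat \<Rightarrow> int"
  have inj: "inj_on h (dvec \<nu> ` T)"
  proof (rule inj_onI)
    fix d1 d2 assume d1: "d1 \<in> dvec \<nu> ` T" and d2: "d2 \<in> dvec \<nu> ` T" and eq: "h d1 = h d2"
    show "d1 = d2"
    proof
      fix i
      show "d1 i = d2 i"
      proof (cases "i < \<nu>")
        case False then show ?thesis using d1 d2 by (auto simp: dvec_def)
      next
        case True
        show ?thesis
        proof (cases "i \<in> core \<nu> T")
          case True
          then obtain I where I: "I \<in> IT" "i \<in> I" using core by auto
          have "h d1 I = h d2 I" using eq by simp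
          then have "restrict d1 I i = restrict d2 I i" using I by (simp add: h_def)
          then show ?thesis using I by simp
        next
          case False
          then have "\<forall>(s, s')\<in>T. fst s ! i = fst s' ! i" using \<open>i < \<nu>\<close> unfolding core_def by auto
          then have z: "\<forall>e\<in>T. dvec \<nu> e i = 0" using \<open>i < \<nu>\<close> by (auto simp: dvec_def)
          then show ?thesis using d1 d2 by auto
        qed
      qed
    qed
  qed
  have img: "h ` (dvec \<nu> ` T) \<subseteq> PiE IT R"
  proof
    fix x assume "x \<in> h ` (dvec \<nu> ` T)"
    then obtain s s' where e: "(s, s') \<in> T" and x: "x = h (dvec \<nu> (s, s'))" by auto
    have "restrict (dvec \<nu> (s, s')) I \<in> R I" if "I \<in> IT" for I
    proof -
      have "restrict (dvec \<nu> (s, s')) I = restrict (\<lambda>i. int (fst s ! i) - int (fst s' ! i)) I"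
        using sub that by (auto simp: dvec_def restrict_def fun_eq_iff)
      then show ?thesis using e unfolding R_def by force
    qed
    then show "x \<in> PiE IT R" unfolding x h_def by auto
  qed
  have fR: "finite (R I)" for I using fT by (simp add: R_def)
  have "card (dvec \<nu> ` T) \<le> card (PiE IT R)"
    by (rule card_inj_on_le[OF inj img]) (simp add: fI fR finite_PiE)
  also have "\<dots> = (\<Prod>I\<in>IT. card (R I))" by (rule card_PiE[OF fI])
  also have "\<dots> \<le> \<mu> ^ \<beta>"
  proof (rule prod_le_power[OF _ cI mu])
    fix I assume "I \<in> IT"
    then show "0 \<le> card (R I) \<and> card (R I) \<le> \<mu>" using div by (simp add: R_def diversity_def)
  qed
  finally show ?thesis .
qed

lemma dec_chain:
  fixes h :: "nat \<Rightarrow> real"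
  assumes "\<And>j. j < k \<Longrightarrow> h (Suc j) < h j"
  shows "j1 < j2 \<Longrightarrow> j2 \<le> k \<Longrightarrow> h j2 < h j1"
proof (induction j2)
  case 0 then show ?case by simp
next
  case (Suc j2)
  have "h (Suc j2) < h j2" using assms Suc.prems by simp
  show ?case
  proof (cases "j1 = j2")
    case True then show ?thesis using \<open>h (Suc j2) < h j2\<close> by simp
  next
    case False
    then have "h j2 < h j1" using Suc by simp
    then show ?thesis using \<open>h (Suc j2) < h j2\<close> by simp
  qed
qed

lemma cost_diff:
  assumes "s \<in> configs M \<nu> \<nu>b" "t \<in> configs M \<nu> \<nu>b" "\<forall>i<\<nu>. c i \<in> {-1..1}"
  shows "cost \<nu> c s - cost \<nu> c t \<le> real \<nu> * real M"
proof -
  have "cost \<nu> c s - cost \<nu> c t = (\<Sum>i<\<nu>. c i * (real (fst s ! i) - real (fst t ! i)))"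
    unfolding cost_def by (simp add: sum_subtractf algebra_simps)
  also have "\<dots> \<le> (\<Sum>i<\<nu>. real M)"
  proof (rule sum_mono)
    fix i assume i: "i \<in> {..<\<nu>}"
    have "fst s ! i \<in> set (fst s)" "fst t ! i \<in> set (fst t)" using i assms(1,2) by (auto simp: configs_def)
    then have a: "fst s ! i \<le> M" "fst t ! i \<le> M" using assms(1,2) by (auto simp: configs_def)
    have "\<bar>real (fst s ! i) - real (fst t ! i)\<bar> \<le> real M" using a by linarith
    moreover have "\<bar>c i\<bar> \<le> 1" using assms(3) i by auto
    ultimately have "\<bar>c i\<bar> * \<bar>real (fst s ! i) - real (fst t ! i)\<bar> \<le> 1 * real M"
      by (intro mult_mono) auto
    have "c i * (real (fst s ! i) - real (fst t ! i)) \<le> \<bar>c i * (real (fst s ! i) - real (fst t ! i))\<bar>"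
      by (rule abs_ge_self)
    also have "\<dots> = \<bar>c i\<bar> * \<bar>real (fst s ! i) - real (fst t ! i)\<bar>" by (rule abs_mult)
    also have "\<dots> \<le> 1 * real M" by fact
    finally show "c i * (real (fst s ! i) - real (fst t ! i)) \<le> real M" by simp
  qed
  finally show ?thesis by simp
qed

lemma cost_dvec:
  "cost \<nu> c s - cost \<nu> c s' = (\<Sum>i<\<nu>. real_of_int (dvec \<nu> (s, s') i) * c i)"
  unfolding cost_def dvec_def by (simp add: sum_subtractf[symmetric] algebra_simps)


lemma path_len:
  assumes p: "p \<in> trans_paths \<nu> c S N" and SC: "S \<subseteq> configs M \<nu> \<nu>b"
  shows "length p \<le> (M + 1) ^ \<nu>"
proof -
  let ?k = "length p - 1"
  have pne: "p \<noteq> []" and pS: "set p \<subseteq> S" and ed: "\<forall>j < ?k. (p ! j, p ! Suc j) \<in> trans_edges \<nu> c S N"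
    using p unfolding trans_paths_def by auto
  have dec: "cost \<nu> c (p ! Suc j) < cost \<nu> c (p ! j)" if "j < ?k" for j
    using ed that unfolding trans_edges_def by auto
  have inj: "inj_on (\<lambda>j. fst (p ! j)) {..<length p}"
  proof (rule inj_onI, rule ccontr)
    fix j1 j2 assume j: "j1 \<in> {..<length p}" "j2 \<in> {..<length p}" "fst (p ! j1) = fst (p ! j2)" "j1 \<noteq> j2"
    have ceq: "cost \<nu> c (p ! j1) = cost \<nu> c (p ! j2)" using j(3) unfolding cost_def by simp
    show False
    proof (cases "j1 < j2")
      case True
      then have "cost \<nu> c (p ! j2) < cost \<nu> c (p ! j1)"
        using dec_chain[of ?k "\<lambda>j. cost \<nu> c (p ! j)" j1 j2] dec j by auto
      then show False using ceq by simp
    next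
      case False
      then have "j2 < j1" using j by simp
      then have "cost \<nu> c (p ! j1) < cost \<nu> c (p ! j2)"
        using dec_chain[of ?k "\<lambda>j. cost \<nu> c (p ! j)" j2 j1] dec j by auto
      then show False using ceq by simp
    qed
  qed
  have img: "(\<lambda>j. fst (p ! j)) ` {..<length p} \<subseteq> {xs. set xs \<subseteq> {0..M} \<and> length xs = \<nu>}"
  proof
    fix x assume "x \<in> (\<lambda>j. fst (p ! j)) ` {..<length p}"
    then obtain j where "j < length p" "x = fst (p ! j)" by auto
    then have "p ! j \<in> configs M \<nu> \<nu>b" using pS SC nth_mem by blast
    then show "x \<in> {xs. set xs \<subseteq> {0..M} \<and> length xs = \<nu>}" using \<open>x = _\<close> by (auto simp: configs_def)
  qed
  have "card {..<length p} \<le> card {xs. set xs \<subseteq> {0..M} \<and> length xs = \<nu>}"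
    by (rule card_inj_on_le[OF inj img]) (simp add: finite_lists_length_eq)
  then show ?thesis by (simp add: card_lists_length_eq)
qed

lemma path_drop:
  assumes p: "p \<in> trans_paths \<nu> c S N" and SC: "S \<subseteq> configs M \<nu> \<nu>b" and cb: "\<forall>i<\<nu>. c i \<in> {-1..1}"
    and j: "1 \<le> j" "j \<le> length p - 1"
  shows "\<exists>e\<in>nbh_edges S N. 0 < (\<Sum>i<\<nu>. real_of_int (dvec \<nu> e i) * c i) \<and>
            (\<Sum>i<\<nu>. real_of_int (dvec \<nu> e i) * c i) \<le> real \<nu> * real M / real j"
proof -
  let ?k = "length p - 1"
  let ?dr = "\<lambda>j. cost \<nu> c (p ! j) - cost \<nu> c (p ! Suc j)"
  have pne: "p \<noteq> []" and pS: "set p \<subseteq> S" and ed: "\<forall>j < ?k. (p ! j, p ! Suc j) \<in> trans_edges \<nu> c S N"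
    using p unfolding trans_paths_def by auto
  have kpos: "?k > 0" using j by simp
  have "(\<Sum>j<?k. ?dr j) = cost \<nu> c (p ! 0) - cost \<nu> c (p ! ?k)"
    by (rule sum_lessThan_telescope')
  also have "\<dots> \<le> real \<nu> * real M"
  proof (rule cost_diff[OF _ _ cb])
    have "p ! 0 \<in> set p" "p ! ?k \<in> set p" using pne by auto
    then show "p ! 0 \<in> configs M \<nu> \<nu>b" "p ! ?k \<in> configs M \<nu> \<nu>b" using pS SC by auto
  qed
  finally have tot: "(\<Sum>j<?k. ?dr j) \<le> real \<nu> * real M" .
  obtain j0 where j0: "j0 < ?k" "?dr j0 \<le> real \<nu> * real M / real ?k"
  proof (rule ccontr)
    assume "\<not> thesis"
    then have "\<forall>j0<?k. real \<nu> * real M / real ?k < ?dr j0" using that by force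
    then have "(\<Sum>j<?k. real \<nu> * real M / real ?k) < (\<Sum>j<?k. ?dr j)"
      using kpos by (intro sum_strict_mono) (auto simp: lessThan_empty_iff)
    then show False using tot kpos by simp
  qed
  have e: "(p ! j0, p ! Suc j0) \<in> trans_edges \<nu> c S N" using ed j0 by auto
  then have en: "(p ! j0, p ! Suc j0) \<in> nbh_edges S N" and pos: "0 < ?dr j0" unfolding trans_edges_def by auto
  have "real \<nu> * real M / real ?k \<le> real \<nu> * real M / real j"
    using j by (intro divide_left_mono) auto
  then show ?thesis using en pos j0 by (intro bexI[OF _ en]) (simp add: cost_dvec[symmetric])
qed


lemma harm_bound:
  assumes M: "M \<ge> (1::nat)" and nu: "\<nu> \<ge> (1::nat)"
  shows "harm ((M + 1) ^ \<nu> - 1) \<le> 2 * real \<nu> * log 2 (real M + 1)"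
proof -
  define L where "L = (M + 1) ^ \<nu> - 1"
  have "2 \<le> M + 1" using M by simp
  also have "M + 1 = (M + 1) ^ 1" by simp
  also have "\<dots> \<le> (M + 1) ^ \<nu>" by (rule power_increasing) (use nu in auto)
  finally have L1: "L \<ge> 1" by (simp add: L_def)
  have "harm L - ln (real L) \<le> harm 1 - ln (real (1::nat))"
    by (rule euler_mascheroni_sequence_decreasing) (use L1 in auto)
  then have h: "harm L \<le> 1 + ln (real L)" by (simp add: harm_def)
  have "L \<le> (M + 1) ^ \<nu>" by (simp add: L_def)
  then have "real L \<le> real ((M + 1) ^ \<nu>)" by (simp only: of_nat_le_iff)
  then have "real L \<le> (real M + 1) ^ \<nu>" by (simp add: add.commute)
  then have "ln (real L) \<le> ln ((real M + 1) ^ \<nu>)" using L1 by (intro ln_mono) auto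
  also have "\<dots> = real \<nu> * ln (real M + 1)" by (simp add: ln_realpow)
  also have "\<dots> \<le> real \<nu> * log 2 (real M + 1)"
  proof (rule mult_left_mono)
    have "ln 2 \<le> (1::real)" using ln_2_less_1 by simp
    moreover have "0 \<le> ln (real M + 1)" by simp
    ultimately show "ln (real M + 1) \<le> log 2 (real M + 1)"
      unfolding log_def by (simp add: le_divide_eq mult_left_le)
  qed simp
  finally have a: "ln (real L) \<le> real \<nu> * log 2 (real M + 1)" .
  have "1 \<le> log 2 (real M + 1)" using M by simp
  then have "1 * 1 \<le> real \<nu> * log 2 (real M + 1)"
    by (intro mult_mono) (use nu in auto)
  then show ?thesis using h a unfolding L_def by simp
qed


theorem theorem3p2:
  fixes M \<nu> \<nu>b lam \<beta> \<mu> :: nat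
    and \<phi> :: real
    and S :: "config set" and N :: "config \<Rightarrow> config set"
    and f :: "nat \<Rightarrow> real \<Rightarrow> real"
  assumes "\<phi> \<ge> 1/2" and "lam \<ge> 1" and "\<beta> \<ge> 1" and "\<mu> \<ge> 1"
    and "M \<ge> 1" and "\<nu> \<ge> 1"
    and "finite S" and "S \<subseteq> configs M \<nu> \<nu>b"
    and "\<forall>s\<in>S. N s \<subseteq> S"
    and "\<forall>i<\<nu>. smoothed_density \<phi> (f i)"
    and "separable \<nu> S N lam \<beta> \<mu>"
  shows "(\<integral>\<^sup>+ c. max_steps \<nu> c S N \<partial>(PiM {..<\<nu>} (\<lambda>i. density lborel (\<lambda>x. ennreal (f i x)))))
         \<le> ennreal (3 * real \<mu> ^ \<beta> * real lam * real \<nu> ^ 2 * real M * log 2 (real M + 1) * \<phi>)"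
proof -
  note phi = assms(1) and lam = assms(2) and beta = assms(3) and mu = assms(4) and M1 = assms(5)
    and nu1 = assms(6) and fS = assms(7) and SC = assms(8) and NS = assms(9) and dens = assms(10)
    and sep = assms(11)
  define P where "P = PiM {..<\<nu>} (\<lambda>i. density lborel (\<lambda>x. ennreal (f i x)))"
  define E where "E = nbh_edges S N"
  define D where "D = dvec \<nu> ` E"
  define L where "L = (M + 1) ^ \<nu> - 1"
  define A where "A d j = {c \<in> space P. 0 < (\<Sum>i<\<nu>. real_of_int (d i) * c i) \<and>
       (\<Sum>i<\<nu>. real_of_int (d i) * c i) \<le> real \<nu> * real M / real j}" for d :: "nat \<Rightarrow> int" and j :: nat
  define g where "g c = (\<Sum>j\<in>{1..L}. \<Sum>d\<in>D. (indicator (A d j) c :: ennreal))" for c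
  have fE: "finite E" unfolding E_def nbh_edges_def
    by (rule finite_subset[of _ "S \<times> S"]) (use NS fS in auto)
  have fD: "finite D" unfolding D_def using fE by simp
  have phi0: "0 \<le> \<phi>" using phi by simp
  have cardD: "card D \<le> lam * \<mu> ^ \<beta>"
  proof -
    obtain \<E> \<I> where H: "finite \<E> \<and> (\<forall>T\<in>\<E>. T \<subseteq> nbh_edges S N) \<and> \<Union>\<E> = nbh_edges S N \<and>
       (\<forall>I\<in>\<I>. I \<subseteq> {..<\<nu>}) \<and> \<Union>\<I> = {..<\<nu>} \<and> card \<E> \<le> lam \<and>
       (\<forall>T\<in>\<E>. (\<exists>\<I>T \<subseteq> \<I>. finite \<I>T \<and> card \<I>T \<le> \<beta> \<and> core \<nu> T \<subseteq> \<Union>\<I>T) \<and>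
                (\<forall>I\<in>\<I>. diversity I T \<le> \<mu>))"
      using sep unfolding separable_def by (elim exE) (erule that)
    have fEE: "finite \<E>" and sub: "\<forall>T\<in>\<E>. T \<subseteq> E" and un: "\<Union>\<E> = E"
      and Isub: "\<forall>I\<in>\<I>. I \<subseteq> {..<\<nu>}" and cE: "card \<E> \<le> lam"
      and cl: "\<forall>T\<in>\<E>. (\<exists>IT \<subseteq> \<I>. finite IT \<and> card IT \<le> \<beta> \<and> core \<nu> T \<subseteq> \<Union>IT) \<and> (\<forall>I\<in>\<I>. diversity I T \<le> \<mu>)"
      using H unfolding E_def by simp_all
    have "D = (\<Union>T\<in>\<E>. dvec \<nu> ` T)" unfolding D_def un[symmetric] by auto
    then have "card D \<le> (\<Sum>T\<in>\<E>. card (dvec \<nu> ` T))" using card_UN_le[OF fEE] by simp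
    also have "\<dots> \<le> of_nat (card \<E>) * \<mu> ^ \<beta>"
    proof (rule sum_bounded_above)
      fix T assume T: "T \<in> \<E>"
      have c1: "\<exists>IT \<subseteq> \<I>. finite IT \<and> card IT \<le> \<beta> \<and> core \<nu> T \<subseteq> \<Union>IT" using cl T by simp
      then obtain IT where IT: "IT \<subseteq> \<I>" "finite IT" "card IT \<le> \<beta>" "core \<nu> T \<subseteq> \<Union>IT"
        by (elim exE conjE) (rule that; assumption)
      have dv: "\<forall>I\<in>\<I>. diversity I T \<le> \<mu>" using cl T by simp
      have "T \<subseteq> E" using sub T by simp
      then have fT: "finite T" using fE by (rule finite_subset)
      show "card (dvec \<nu> ` T) \<le> \<mu> ^ \<beta>"
        by (rule card_DT[OF fT IT(2) IT(3) mu IT(4)]) (use IT(1) Isub dv in auto)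
    qed
    also have "\<dots> \<le> lam * \<mu> ^ \<beta>" using cE by simp
    finally show ?thesis .
  qed
  have comp[measurable]: "(\<lambda>x. x i) \<in> borel_measurable P" if "i \<in> {..<\<nu>}" for i
  proof -
    have "(\<lambda>x. x i) \<in> measurable P (density lborel (\<lambda>x. ennreal (f i x)))"
      unfolding P_def by (rule measurable_component_singleton) (use that in simp)
    moreover have "sets (density lborel (\<lambda>x. ennreal (f i x))) = sets borel" by simp
    ultimately show ?thesis using measurable_cong_sets[OF refl, of "density lborel (\<lambda>x. ennreal (f i x))" borel] by metis
  qed
  have sm[measurable]: "(\<lambda>c. \<Sum>i<\<nu>. real_of_int (d i) * c i) \<in> borel_measurable P" for d :: "nat \<Rightarrow> int"
    by (intro borel_measurable_sum borel_measurable_times borel_measurable_const comp) auto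
  have Am[measurable]: "A d j \<in> sets P" for d j unfolding A_def by measurable
  have Ab: "emeasure P (A d j) \<le> ennreal (\<phi> * (real \<nu> * real M / real j))" for d j
  proof (cases "\<exists>i0<\<nu>. d i0 \<noteq> 0")
    case True
    then obtain i0 where "i0 < \<nu>" "d i0 \<noteq> 0" by auto
    then show ?thesis unfolding A_def P_def by (intro prod_bound[OF dens]) auto
  next
    case False
    then have "A d j = {}" unfolding A_def by auto
    then show ?thesis by simp
  qed
  have dens_ps: "prob_space (density lborel (\<lambda>x. ennreal (f i x)))" if "i \<in> {..<\<nu>}" for i
    using dens that by (intro dens_prob) auto
  have AEb: "AE c in P. \<forall>i\<in>{..<\<nu>}. c i \<in> {-1..1}"
  proof (rule AE_finite_allI)
    fix i assume i: "i \<in> {..<\<nu>}"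
    have fm: "(\<lambda>x. ennreal (f i x)) \<in> borel_measurable lborel"
      using dens i unfolding smoothed_density_def by auto
    have "AE y in density lborel (\<lambda>x. ennreal (f i x)). y \<in> {-1..1}"
      unfolding AE_density[OF fm]
    proof (rule AE_I2, rule impI, rule ccontr)
      fix y assume "0 < ennreal (f i y)" "y \<notin> {-1..1}"
      then show False using dens i unfolding smoothed_density_def by auto
    qed
    then show "AE c in P. c i \<in> {-1..1}" unfolding P_def
      using AE_PiM_component[of "{..<\<nu>}" "\<lambda>i. density lborel (\<lambda>x. ennreal (f i x))" i "\<lambda>y. y \<in> {-1..1}"] dens_ps i
      by blast
  qed simp
  have pw: "max_steps \<nu> c S N \<le> g c" if c: "c \<in> space P" "\<forall>i\<in>{..<\<nu>}. c i \<in> {-1..1}" for c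
    unfolding max_steps_def
  proof (rule SUP_least)
    fix p assume p: "p \<in> trans_paths \<nu> c S N"
    let ?k = "length p - 1"
    have cb: "\<forall>i<\<nu>. c i \<in> {-1..1}" using c by auto
    have kL: "?k \<le> L" using path_len[OF p SC] unfolding L_def by simp
    have one: "1 \<le> (\<Sum>d\<in>D. (indicator (A d j) c :: ennreal))" if j: "j \<in> {1..?k}" for j
    proof -
      obtain e where e: "e \<in> nbh_edges S N" "0 < (\<Sum>i<\<nu>. real_of_int (dvec \<nu> e i) * c i)"
        "(\<Sum>i<\<nu>. real_of_int (dvec \<nu> e i) * c i) \<le> real \<nu> * real M / real j"
        using path_drop[OF p SC cb, of j] j by auto
      have dD: "dvec \<nu> e \<in> D" using e(1) unfolding D_def E_def by simp
      have "c \<in> A (dvec \<nu> e) j" using e c(1) unfolding A_def by auto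
      then have "1 = (indicator (A (dvec \<nu> e) j) c :: ennreal)" by simp
      also have "\<dots> \<le> (\<Sum>d\<in>D. (indicator (A d j) c :: ennreal))"
        by (rule member_le_sum[OF dD]) (auto simp: fD)
      finally show ?thesis .
    qed
    have "ennreal (real ?k) = (\<Sum>j\<in>{1..?k}. (1::ennreal))" by (simp add: ennreal_of_nat_eq_real_of_nat)
    also have "\<dots> \<le> (\<Sum>j\<in>{1..?k}. \<Sum>d\<in>D. (indicator (A d j) c :: ennreal))"
      by (rule sum_mono) (rule one)
    also have "\<dots> \<le> g c" unfolding g_def
      by (rule sum_mono2) (use kL in auto)
    finally show "ennreal (real ?k) \<le> g c" .
  qed
  have "(\<integral>\<^sup>+ c. max_steps \<nu> c S N \<partial>P) \<le> (\<integral>\<^sup>+ c. g c \<partial>P)"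
  proof (rule nn_integral_mono_AE)
    show "AE c in P. max_steps \<nu> c S N \<le> g c"
      using AE_space[of P] AEb
    proof eventually_elim
      case (elim c) then show ?case by (intro pw) auto
    qed
  qed
  also have "\<dots> = (\<Sum>j\<in>{1..L}. \<Sum>d\<in>D. emeasure P (A d j))"
    unfolding g_def by (simp add: nn_integral_sum)
  also have "\<dots> \<le> (\<Sum>j\<in>{1..L}. \<Sum>d\<in>D. ennreal (\<phi> * (real \<nu> * real M / real j)))"
    by (intro sum_mono Ab)
  also have "\<dots> = (\<Sum>j\<in>{1..L}. ennreal (\<Sum>d\<in>D. \<phi> * (real \<nu> * real M / real j)))"
    by (intro sum.cong refl sum_ennreal) (use phi0 in auto)
  also have "\<dots> = ennreal (\<Sum>j\<in>{1..L}. \<Sum>d\<in>D. \<phi> * (real \<nu> * real M / real j))"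
    by (intro sum_ennreal sum_nonneg) (use phi0 in auto)
  also have "\<dots> \<le> ennreal (3 * real \<mu> ^ \<beta> * real lam * real \<nu> ^ 2 * real M * log 2 (real M + 1) * \<phi>)"
  proof (rule ennreal_leI)
    have "(\<Sum>j\<in>{1..L}. \<Sum>d\<in>D. \<phi> * (real \<nu> * real M / real j))
        = real (card D) * (\<phi> * real \<nu> * real M) * harm L"
      unfolding harm_def by (simp add: sum_distrib_left divide_inverse mult_ac)
    also have "\<dots> \<le> (real lam * real \<mu> ^ \<beta>) * (\<phi> * real \<nu> * real M) * (2 * real \<nu> * log 2 (real M + 1))"
    proof (intro mult_mono)
      show "real (card D) \<le> real lam * real \<mu> ^ \<beta>" using cardD
        by (metis of_nat_le_iff of_nat_mult of_nat_power)
      show "harm L \<le> 2 * real \<nu> * log 2 (real M + 1)" unfolding L_def by (rule harm_bound[OF M1 nu1])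
    qed (use phi0 M1 in \<open>auto intro!: mult_nonneg_nonneg harm_nonneg\<close>)
    also have "\<dots> \<le> 3 * real \<mu> ^ \<beta> * real lam * real \<nu> ^ 2 * real M * log 2 (real M + 1) * \<phi>"
    proof -
      have "0 \<le> real lam * real \<mu> ^ \<beta> * \<phi> * real \<nu> * real M * real \<nu> * log 2 (real M + 1)"
        using phi0 M1 by (intro mult_nonneg_nonneg) auto
      then show ?thesis by (simp add: power2_eq_square mult_ac)
    qed
    finally show "(\<Sum>j\<in>{1..L}. \<Sum>d\<in>D. \<phi> * (real \<nu> * real M / real j))
      \<le> 3 * real \<mu> ^ \<beta> * real lam * real \<nu> ^ 2 * real M * log 2 (real M + 1) * \<phi>" .
  qed
  finally show ?thesis unfolding P_def .
qed

end
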